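(* Let $H=(V,F)$ be a finite hypergraph with directed edge set $\vec E$. Let $(r_i)_{i\in V}$ be positive integers and, for each $\alpha\in F$ and distinct $i,j\in\alpha$, let $u^\alpha_{i\to j}\in\mathbb{C}^{r_j\times r_i}$. Put $r_e=r_{t(e)}$ and $u_{e'\rightharpoonup e}=u^{s(e)}_{t(e')\to t(e)}$, and let $\mathcal M(\boldsymbol u)$ be the operator on $\bigoplus_{e\in\vec E}\mathbb{C}^{r_e}$ given by $(\mathcal M(\boldsymbol u)f)(e)=\sum_{e':e'\rightharpoonup e}u_{e'\rightharpoonup e}f(e')$. For $\alpha=\{i_1,\dots,i_{d_\alpha}\}\in F$ let $U_\alpha$ be the block matrix with blocks indexed by $\alpha\times\alpha$ whose $(i,i)$ block is $I_{r_i}$ and whose $(i,j)$ block ($i\ne j$) is $u^\alpha_{j\to i}$; assume each $U_\alpha$ is invertible and write $W_\alpha=U_\alpha^{-1}$, with $(i,j)$ block denoted $w^\alpha_{j\to i}\in\mathbb{C}^{r_i\times r_j}$ (including $i=j$). Define linear operators $\mathcal D,\mathcal W$ on $\bigoplus_{i\in V}\mathbb{C}^{r_i}$ by $$(\mathcal Dg)(i)=d_i\,g(i),\qquad (\mathcal Wg)(i)=\sum_{\substack{e,e'\in\vec E\\ t(e)=i,\ s(e)=s(e')}}w^{s(e)}_{t(e')\to i}\,g(t(e')).$$ Then, with $r_V=\sum_{i\in V}r_i$, $$\zeta_H(\boldsymbol u)^{-1}=\det(I-\mathcal M(\boldsymbol u))=\det\big(I_{r_V}-\mathcal D+\mathcal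 W\big)\prod_{\alpha\in F}\det U_\alpha .$$
   Context: A finite hypergraph $H=(V,F)$: $V$ finite, $F$ a finite set of nonempty subsets of $V$; $d_i=|\{\alpha\in F: i\in\alpha\}|$, $d_\alpha=|\alpha|$. Directed edges $\vec E=\{(\alpha\to i): i\in\alpha\in F\}$ with $s(\alpha\to i)=\alpha$, $t(\alpha\to i)=i$. Write $e'\rightharpoonup e$ if $t(e')\in s(e)$, $t(e')\ne t(e)$, $s(e')\ne s(e)$. Closed geodesics are sequences $(e_1,\dots,e_k)$ with $e_l\rightharpoonup e_{l+1}$ cyclically; prime cycles are cyclic-permutation classes of closed geodesics that are not $m$-fold repetitions ($m\ge2$) of shorter ones; $\pi(e_1,\dots,e_k)=u_{e_k\rightharpoonup e_1}\cdots u_{e_1\rightharpoonup e_2}$; the graph zeta function is $\zeta_H(\boldsymbol u)=\prod_{\mathfrak p}\det(I-\pi(\mathfrak p))^{-1}$, its reciprocal being understood as the formal power series $\det(I-\mathcal M(\boldsymbol u))$. *)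

theory Defs
  imports "HOL-Combinatorics.Permutations" Complex_Main
begin

text \<open>Block matrices on direct sums are represented
by index sets of pairs (block index, position inside the block).\<close>
definition det_on :: "'a set \<Rightarrow> ('a \<Rightarrow> 'a \<Rightarrow> complex) \<Rightarrow> complex" where
  "det_on S A = (\<Sum>p\<in>{p. p permutes S}. of_int (sign p) * (\<Prod>x\<in>S. A x (p x)))"

definition idm :: "'a \<Rightarrow> 'a \<Rightarrow> complex" where
  "idm x y = (if x = y then 1 else 0)"

text \<open>Directed edges (alpha \<rightarrow> i), encoded as pairs (alpha, i); s = fst, t = snd.\<close>
definition dedges :: "'v set set \<Rightarrow> ('v set \<times> 'v) set" where
  "dedges F = {(\<alpha>, i). \<alpha> \<in> F \<and> i \<in> \<alpha>}"

definition feeds :: "('v set \<times> 'v) \<Rightarrow> ('v set \<times> 'v) \<Rightarrow> bool" where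
  "feeds e' e \<longleftrightarrow> snd e' \<in> fst e \<and> snd e' \<noteq> snd e \<and> fst e' \<noteq> fst e"

definition hdeg :: "'v set set \<Rightarrow> 'v \<Rightarrow> nat" where
  "hdeg F i = card {\<alpha> \<in> F. i \<in> \<alpha>}"

text \<open>u \<alpha> i j is the r_j x r_i matrix u^alpha_{i->j}; entry (a,b) with a < r j, b < r i.\<close>

definition edge_idx :: "'v set set \<Rightarrow> ('v \<Rightarrow> nat) \<Rightarrow> (('v set \<times> 'v) \<times> nat) set" where
  "edge_idx F r = {(e, a). e \<in> dedges F \<and> a < r (snd e)}"

definition vert_idx :: "'v set \<Rightarrow> ('v \<Rightarrow> nat) \<Rightarrow> ('v \<times> nat) set" where
  "vert_idx A r = {(i, a). i \<in> A \<and> a < r i}"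

text \<open>The operator M(u): entry ((e,a),(e',b)) is the (a,b) entry of u_{e' \<rightharpoonup> e}
  = u^{s(e)}_{t(e') \<rightarrow> t(e)} if e' \<rightharpoonup> e, and 0 otherwise.\<close>
definition Mop :: "('v set \<Rightarrow> 'v \<Rightarrow> 'v \<Rightarrow> nat \<Rightarrow> nat \<Rightarrow> complex)
    \<Rightarrow> (('v set \<times> 'v) \<times> nat) \<Rightarrow> (('v set \<times> 'v) \<times> nat) \<Rightarrow> complex" where
  "Mop u x y = (case x of (e, a) \<Rightarrow> case y of (e', b) \<Rightarrow>
      if feeds e' e then u (fst e) (snd e') (snd e) a b else 0)"

definition zeta_inv :: "'v set set \<Rightarrow> ('v \<Rightarrow> nat)
    \<Rightarrow> ('v set \<Rightarrow> 'v \<Rightarrow> 'v \<Rightarrow> nat \<Rightarrow> nat \<Rightarrow> complex) \<Rightarrow> complex" where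
  "zeta_inv F r u = det_on (edge_idx F r) (\<lambda>x y. idm x y - Mop u x y)"

definition Umat :: "('v set \<Rightarrow> 'v \<Rightarrow> 'v \<Rightarrow> nat \<Rightarrow> nat \<Rightarrow> complex) \<Rightarrow> 'v set
    \<Rightarrow> ('v \<times> nat) \<Rightarrow> ('v \<times> nat) \<Rightarrow> complex" where
  "Umat u \<alpha> x y = (case x of (i, a) \<Rightarrow> case y of (j, b) \<Rightarrow>
      if i = j then (if a = b then 1 else 0) else u \<alpha> j i a b)"

definition is_inverse_on :: "'a set \<Rightarrow> ('a \<Rightarrow> 'a \<Rightarrow> complex) \<Rightarrow> ('a \<Rightarrow> 'a \<Rightarrow> complex) \<Rightarrow> bool" where
  "is_inverse_on S U W \<longleftrightarrow>
     (\<forall>x\<in>S. \<forall>y\<in>S. (\<Sum>z\<in>S. U x z * W z y) = idm x y \<and> (\<Sum>z\<in>S. W x z * U z y) = idm x y)"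

definition Dop :: "'v set set \<Rightarrow> ('v \<times> nat) \<Rightarrow> ('v \<times> nat) \<Rightarrow> complex" where
  "Dop F x y = (if x = y then of_nat (hdeg F (fst x)) else 0)"

text \<open>The operator W: entry ((i,a),(j,b)) = sum over e, e' in dedges with t(e) = i,
  s(e) = s(e'), t(e') = j of the (a,b) entry of w^{s(e)}_{t(e') -> i},
  i.e. of the ((i,a),(j,b)) entry of W_{s(e)}.\<close>
definition Wop :: "'v set set \<Rightarrow> ('v set \<Rightarrow> ('v \<times> nat) \<Rightarrow> ('v \<times> nat) \<Rightarrow> complex)
    \<Rightarrow> ('v \<times> nat) \<Rightarrow> ('v \<times> nat) \<Rightarrow> complex" where
  "Wop F w x y = (\<Sum>(e, e') \<in> {(e, e'). e \<in> dedges F \<and> e' \<in> dedges F \<and>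
        snd e = fst x \<and> fst e = fst e' \<and> snd e' = fst y}. w (fst e) x y)"

end

theory Submission imports Defs "Jordan_Normal_Form.Determinant" begin

lemma sign_conj:
  assumes bij: "bij_betw f T S" and fin: "finite T" and q: "q permutes T"
  shows "sign (\<lambda>x. if x \<in> S then f (q (inv_into T f x)) else x) = sign q"
  using q fin
proof (induction q rule: permutes_induct)
  case id
  have "(\<lambda>x. if x \<in> S then f (id (inv_into T f x)) else x) = id"
    using bij by (auto simp: bij_betw_inv_into_right fun_eq_iff)
  then show ?case by simp
next
  case (swap a b p)
  let ?g = "inv_into T f"
  let ?c = "\<lambda>p. (\<lambda>x. if x \<in> S then f (p (?g x)) else x)"
  have finS: "finite S" using bij fin bij_betw_finite by blast
  have fa: "f a \<in> S" "f b \<in> S" using swap bij by (auto simp: bij_betw_def)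
  have fab: "f a \<noteq> f b" using swap bij by (auto simp: bij_betw_def inj_on_def)
  have eq: "?c (Transposition.transpose a b \<circ> p) = Transposition.transpose (f a) (f b) \<circ> ?c p"
  proof
    fix x show "?c (Transposition.transpose a b \<circ> p) x = (Transposition.transpose (f a) (f b) \<circ> ?c p) x"
    proof (cases "x \<in> S")
      case True
      have gx: "?g x \<in> T" using True bij by (metis bij_betw_def inv_into_into)
      then have pg: "p (?g x) \<in> T" using \<open>p permutes T\<close> by (simp add: permutes_in_image)
      have inj: "inj_on f T" using bij by (simp add: bij_betw_def)
      show ?thesis using True pg \<open>a \<in> T\<close> \<open>b \<in> T\<close> inj
        by (auto simp: Transposition.transpose_def inj_on_eq_iff)
    next
      case False
      then show ?thesis using fa by (auto simp: Transposition.transpose_def)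
    qed
  qed
  have cperm: "?c p permutes S"
  proof (rule bij_imp_permutes)
    have b1: "bij_betw ?g S T" using bij by (rule bij_betw_inv_into)
    have b2: "bij_betw p T T" using \<open>p permutes T\<close> by (rule permutes_imp_bij)
    have "bij_betw (f \<circ> p \<circ> ?g) S S"
      using bij_betw_trans[OF bij_betw_trans[OF b1 b2] bij] by (simp add: comp_assoc)
    then show "bij_betw (?c p) S S"
      by (rule bij_betw_cong[THEN iffD1, rotated]) auto
  qed auto
  have "sign (?c (Transposition.transpose a b \<circ> p)) = sign (Transposition.transpose (f a) (f b)) * sign (?c p)"
    unfolding eq
    by (rule sign_compose) (use cperm finS permutation_permutes in \<open>auto simp: permutation_swap_id\<close>)
  also have "\<dots> = sign (Transposition.transpose a b) * sign p"
    using swap fab by (simp add: sign_swap_id)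
  also have "\<dots> = sign (Transposition.transpose a b \<circ> p)"
    by (rule sign_compose[symmetric]) (use swap fin permutation_permutes in \<open>auto simp: permutation_swap_id\<close>)
  finally show ?case .
qed


definition conjp :: "('b \<Rightarrow> 'a) \<Rightarrow> 'b set \<Rightarrow> 'a set \<Rightarrow> ('b \<Rightarrow> 'b) \<Rightarrow> 'a \<Rightarrow> 'a" where
  "conjp f T S q = (\<lambda>x. if x \<in> S then f (q (inv_into T f x)) else x)"

lemma conjp_permutes:
  assumes bij: "bij_betw f T S" and q: "q permutes T"
  shows "conjp f T S q permutes S"
proof (rule bij_imp_permutes)
  have b1: "bij_betw (inv_into T f) S T" using bij by (rule bij_betw_inv_into)
  have b2: "bij_betw q T T" using q by (rule permutes_imp_bij)
  have "bij_betw (f \<circ> q \<circ> inv_into T f) S S"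
    using bij_betw_trans[OF bij_betw_trans[OF b1 b2] bij] by (simp add: comp_assoc)
  then show "bij_betw (conjp f T S q) S S"
    by (rule bij_betw_cong[THEN iffD1, rotated]) (auto simp: conjp_def)
qed (auto simp: conjp_def)

lemma det_on_reindex:
  assumes bij: "bij_betw f T S" and fin: "finite T"
  shows "det_on S A = det_on T (\<lambda>x y. A (f x) (f y))"
proof -
  let ?g = "inv_into T f"
  have bij': "bij_betw ?g S T" using bij by (rule bij_betw_inv_into)
  have ginv: "\<And>x. x \<in> T \<Longrightarrow> ?g (f x) = x" using bij by (simp add: bij_betw_def)
  have finv: "\<And>x. x \<in> S \<Longrightarrow> f (?g x) = x" using bij bij_betw_inv_into_right by fastforce
  have fT: "\<And>x. x \<in> T \<Longrightarrow> f x \<in> S" using bij bij_betwE by blast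
  have gS': "\<And>x. x \<in> S \<Longrightarrow> ?g x \<in> T" using bij' bij_betwE by blast
  have B: "bij_betw (conjp f T S) {q. q permutes T} {p. p permutes S}"
  proof (rule bij_betw_byWitness[where f' = "conjp ?g S T"])
    show "\<forall>q\<in>{q. q permutes T}. conjp ?g S T (conjp f T S q) = q"
    proof
      fix q assume q: "q \<in> {q. q permutes T}"
      show "conjp ?g S T (conjp f T S q) = q"
      proof
        fix x show "conjp ?g S T (conjp f T S q) x = q x"
          using q fT ginv permutes_in_image[of q T] permutes_not_in[of q T]
          by (cases "x \<in> T") (auto simp: conjp_def inv_into_inv_into_eq[OF bij])
      qed
    qed
    show "\<forall>p\<in>{p. p permutes S}. conjp f T S (conjp ?g S T p) = p"
    proof
      fix p assume p: "p \<in> {p. p permutes S}"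
      show "conjp f T S (conjp ?g S T p) = p"
      proof
        fix x show "conjp f T S (conjp ?g S T p) x = p x"
          using p gS' finv permutes_in_image[of p S] permutes_not_in[of p S] bij_betw_inv_into_left[OF bij']
          by (cases "x \<in> S") (auto simp: conjp_def inv_into_inv_into_eq[OF bij])
      qed
    qed
    show "conjp f T S ` {q. q permutes T} \<subseteq> {p. p permutes S}"
      using conjp_permutes[OF bij] by auto
    show "conjp ?g S T ` {p. p permutes S} \<subseteq> {q. q permutes T}"
      using conjp_permutes[OF bij'] by auto
  qed
  have "det_on S A = (\<Sum>q\<in>{q. q permutes T}. of_int (sign (conjp f T S q)) * (\<Prod>x\<in>S. A x (conjp f T S q x)))"
    unfolding det_on_def by (rule sum.reindex_bij_betw[OF B, symmetric])
  also have "\<dots> = det_on T (\<lambda>x y. A (f x) (f y))"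
    unfolding det_on_def
  proof (rule sum.cong[OF refl])
    fix q assume q: "q \<in> {q. q permutes T}"
    have s: "sign (conjp f T S q) = sign q"
      unfolding conjp_def using sign_conj[OF bij fin] q by auto
    have "(\<Prod>x\<in>S. A x (conjp f T S q x)) = (\<Prod>x\<in>T. A (f x) (conjp f T S q (f x)))"
      by (rule prod.reindex_bij_betw[OF bij, symmetric])
    also have "\<dots> = (\<Prod>x\<in>T. A (f x) (f (q x)))"
      by (rule prod.cong[OF refl]) (auto simp: conjp_def fT ginv)
    finally show "of_int (sign (conjp f T S q)) * (\<Prod>x\<in>S. A x (conjp f T S q x)) =
        of_int (sign q) * (\<Prod>x\<in>T. A (f x) (f (q x)))" using s by simp
  qed
  finally show ?thesis .
qed


lemma det_on_nat: "det_on {0..<n} A = det (mat n n (\<lambda>(i,j). A i j))"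
  unfolding det_on_def det_def
  by (auto intro!: sum.cong prod.cong simp: permutes_in_image)

lemma det_on_cong:
  assumes "\<And>x y. x \<in> S \<Longrightarrow> y \<in> S \<Longrightarrow> A x y = B x y"
  shows "det_on S A = det_on S B"
  unfolding det_on_def
  by (auto intro!: sum.cong prod.cong simp: permutes_in_image assms)

lemma det_on_mult:
  assumes fin: "finite S"
  shows "det_on S (\<lambda>x y. \<Sum>z\<in>S. A x z * B z y) = det_on S A * det_on S B"
proof -
  obtain f where f: "bij_betw f {0..<card S} S" using ex_bij_betw_nat_finite[OF fin] by blast
  let ?n = "card S"
  let ?A = "mat ?n ?n (\<lambda>(i,j). A (f i) (f j))"
  let ?B = "mat ?n ?n (\<lambda>(i,j). B (f i) (f j))"
  have "det_on S (\<lambda>x y. \<Sum>z\<in>S. A x z * B z y) = det_on {0..<?n} (\<lambda>i j. \<Sum>z\<in>S. A (f i) z * B z (f j))"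
    by (rule det_on_reindex[OF f]) simp
  also have "\<dots> = det (mat ?n ?n (\<lambda>(i,j). \<Sum>z\<in>S. A (f i) z * B z (f j)))" by (rule det_on_nat)
  also have "mat ?n ?n (\<lambda>(i,j). \<Sum>z\<in>S. A (f i) z * B z (f j)) = ?A * ?B"
  proof (rule eq_matI)
    fix i j assume i: "i < dim_row (?A * ?B)" and j: "j < dim_col (?A * ?B)"
    have "(\<Sum>z\<in>S. A (f i) z * B z (f j)) = (\<Sum>k\<in>{0..<?n}. A (f i) (f k) * B (f k) (f j))"
      by (rule sum.reindex_bij_betw[OF f, symmetric])
    then show "mat ?n ?n (\<lambda>(i,j). \<Sum>z\<in>S. A (f i) z * B z (f j)) $$ (i,j) = (?A * ?B) $$ (i,j)"
      using i j by (simp add: scalar_prod_def)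
  qed auto
  also have "det (?A * ?B) = det ?A * det ?B" by (rule det_mult) auto
  also have "det ?A = det_on S A"
    using det_on_reindex[OF f, of A] det_on_nat by simp
  also have "det ?B = det_on S B"
    using det_on_reindex[OF f, of B] det_on_nat by simp
  finally show ?thesis .
qed

lemma det_on_idm:
  assumes fin: "finite S"
  shows "det_on S idm = 1"
proof -
  obtain f where f: "bij_betw f {0..<card S} S" using ex_bij_betw_nat_finite[OF fin] by blast
  have inj: "inj_on f {0..<card S}" using f bij_betw_def by blast
  have "det_on S idm = det (mat (card S) (card S) (\<lambda>(i,j). idm (f i) (f j)))"
    using det_on_reindex[OF f, of idm] det_on_nat by simp
  also have "mat (card S) (card S) (\<lambda>(i,j). idm (f i) (f j)) = 1\<^sub>m (card S)"
    by (rule eq_matI) (auto simp: idm_def inj_on_eq_iff[OF inj])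
  finally show ?thesis by simp
qed

lemma det_on_block:
  assumes fin1: "finite S1" and fin2: "finite S2" and disj: "S1 \<inter> S2 = {}"
    and z: "\<And>x y. x \<in> S1 \<Longrightarrow> y \<in> S2 \<Longrightarrow> A x y = 0"
  shows "det_on (S1 \<union> S2) A = det_on S1 A * det_on S2 A"
proof -
  obtain f1 where f1: "bij_betw f1 {0..<card S1} S1" using ex_bij_betw_nat_finite[OF fin1] by blast
  obtain f2 where f2: "bij_betw f2 {0..<card S2} S2" using ex_bij_betw_nat_finite[OF fin2] by blast
  define n1 where "n1 = card S1"
  define n2 where "n2 = card S2"
  define g where "g i = (if i < n1 then f1 i else f2 (i - n1))" for i
  have g: "bij_betw g {0..<n1+n2} (S1 \<union> S2)"
  proof -
    have "bij_betw g ({0..<n1} \<union> {n1..<n1+n2}) (S1 \<union> S2)"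
    proof (rule bij_betw_combine[OF _ _ disj])
      show "bij_betw g {0..<n1} S1"
        using f1 unfolding n1_def[symmetric] by (rule bij_betw_cong[THEN iffD1, rotated]) (auto simp: g_def)
      have "bij_betw (\<lambda>i. i - n1) {n1..<n1+n2} {0..<n2}"
        by (rule bij_betw_byWitness[where f'="\<lambda>i. i + n1"]) auto
      then have "bij_betw (f2 \<circ> (\<lambda>i. i - n1)) {n1..<n1+n2} S2"
        using f2 unfolding n2_def[symmetric] by (rule bij_betw_trans)
      then show "bij_betw g {n1..<n1+n2} S2"
        by (rule bij_betw_cong[THEN iffD1, rotated]) (auto simp: g_def)
    qed
    moreover have "{0..<n1} \<union> {n1..<n1+n2} = {0..<n1+n2}" by auto
    ultimately show ?thesis by simp
  qed
  let ?A1 = "mat n1 n1 (\<lambda>(i,j). A (f1 i) (f1 j))"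
  let ?A3 = "mat n2 n1 (\<lambda>(i,j). A (f2 i) (f1 j))"
  let ?A4 = "mat n2 n2 (\<lambda>(i,j). A (f2 i) (f2 j))"
  have f1S: "\<And>i. i < n1 \<Longrightarrow> f1 i \<in> S1" using f1 n1_def bij_betwE by fastforce
  have f2S: "\<And>i. i < n2 \<Longrightarrow> f2 i \<in> S2" using f2 n2_def bij_betwE by fastforce
  have "det_on (S1 \<union> S2) A = det (mat (n1+n2) (n1+n2) (\<lambda>(i,j). A (g i) (g j)))"
    using det_on_reindex[OF g, of A] det_on_nat by simp
  also have "mat (n1+n2) (n1+n2) (\<lambda>(i,j). A (g i) (g j)) = four_block_mat ?A1 (0\<^sub>m n1 n2) ?A3 ?A4"
    by (rule eq_matI) (auto simp: g_def z f1S f2S)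
  also have "det \<dots> = det ?A1 * det ?A4"
    by (rule det_four_block_mat_upper_right_zero) auto
  also have "det ?A1 = det_on S1 A"
    using det_on_reindex[OF f1, of A] det_on_nat n1_def by simp
  also have "det ?A4 = det_on S2 A"
    using det_on_reindex[OF f2, of A] det_on_nat n2_def by simp
  finally show ?thesis .
qed


lemma idm_sum_left: "finite X \<Longrightarrow> x0 \<in> X \<Longrightarrow> (\<Sum>x\<in>X. idm x0 x * f x) = f x0"
proof -
  assume "finite X" "x0 \<in> X"
  have "(\<Sum>x\<in>X. idm x0 x * f x) = (\<Sum>x\<in>X. if x0 = x then f x else 0)"
    by (rule sum.cong) (auto simp: idm_def)
  then show ?thesis using \<open>finite X\<close> \<open>x0 \<in> X\<close> by simp
qed

lemma idm_sum_right: "finite X \<Longrightarrow> x0 \<in> X \<Longrightarrow> (\<Sum>x\<in>X. f x * idm x x0) = f x0"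
proof -
  assume "finite X" "x0 \<in> X"
  have "(\<Sum>x\<in>X. f x * idm x x0) = (\<Sum>x\<in>X. if x = x0 then f x else 0)"
    by (rule sum.cong) (auto simp: idm_def)
  then show ?thesis using \<open>finite X\<close> \<open>x0 \<in> X\<close> by simp
qed

lemma sum_Plus:
  assumes "finite X" "finite Y"
  shows "(\<Sum>z\<in>Inl ` X \<union> Inr ` Y. f z) = (\<Sum>x\<in>X. f (Inl x)) + (\<Sum>y\<in>Y. f (Inr y))"
  using assms by (subst sum.union_disjoint) (auto simp: sum.reindex)

lemma det_on_Inl: "finite X \<Longrightarrow> det_on (Inl ` X) M = det_on X (\<lambda>x x'. M (Inl x) (Inl x'))"
  by (rule det_on_reindex) (auto simp: bij_betw_def)

lemma det_on_Inr: "finite X \<Longrightarrow> det_on (Inr ` X) M = det_on X (\<lambda>x x'. M (Inr x) (Inr x'))"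
  by (rule det_on_reindex) (auto simp: bij_betw_def)

lemma det_on_idm_cong: "finite S \<Longrightarrow> (\<And>x y. x \<in> S \<Longrightarrow> y \<in> S \<Longrightarrow> M x y = idm x y) \<Longrightarrow> det_on S M = 1"
  using det_on_cong det_on_idm by metis

lemma det_on_sylvester:
  fixes A :: "'a \<Rightarrow> 'b \<Rightarrow> complex" and B :: "'b \<Rightarrow> 'a \<Rightarrow> complex"
  assumes fX: "finite X" and fY: "finite Y"
  shows "det_on X (\<lambda>x x'. idm x x' - (\<Sum>y\<in>Y. A x y * B y x'))
       = det_on Y (\<lambda>y y'. idm y y' - (\<Sum>x\<in>X. B y x * A x y'))"
proof -
  let ?Z = "Inl ` X \<union> Inr ` Y"
  define N where "N = (\<lambda>z z'. case z of Inl x \<Rightarrow> (case z' of Inl x' \<Rightarrow> idm x x' | Inr y \<Rightarrow> A x y)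
      | Inr y \<Rightarrow> (case z' of Inl x \<Rightarrow> B y x | Inr y' \<Rightarrow> idm y y'))"
  define L where "L = (\<lambda>z z'. case z of Inl x \<Rightarrow> (case z' of Inl x' \<Rightarrow> idm x x' | Inr y \<Rightarrow> 0)
      | Inr y \<Rightarrow> (case z' of Inl x \<Rightarrow> - B y x | Inr y' \<Rightarrow> idm y y'))"
  have fZ: "finite ?Z" using fX fY by simp
  have detL: "det_on ?Z L = 1"
  proof -
    have "det_on ?Z L = det_on (Inl ` X) L * det_on (Inr ` Y) L"
      by (rule det_on_block) (use fX fY in \<open>auto simp: L_def\<close>)
    moreover have "det_on (Inl ` X) L = 1"
      unfolding det_on_Inl[OF fX] by (rule det_on_idm_cong[OF fX]) (simp add: L_def)
    moreover have "det_on (Inr ` Y) L = 1"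
      unfolding det_on_Inr[OF fY] by (rule det_on_idm_cong[OF fY]) (simp add: L_def)
    ultimately show ?thesis by simp
  qed
  have LN: "det_on ?Z (\<lambda>z z'. \<Sum>w\<in>?Z. L z w * N w z') = det_on Y (\<lambda>y y'. idm y y' - (\<Sum>x\<in>X. B y x * A x y'))"
  proof -
    let ?P = "\<lambda>z z'. \<Sum>w\<in>?Z. L z w * N w z'"
    have "det_on ?Z ?P = det_on (Inr ` Y \<union> Inl ` X) ?P" by (simp add: Un_commute)
    also have "\<dots> = det_on (Inr ` Y) ?P * det_on (Inl ` X) ?P"
    proof (rule det_on_block)
      fix z z' :: "'a + 'b" assume "z \<in> Inr ` Y" "z' \<in> Inl ` X"
      then obtain y x' where "z = Inr y" "z' = Inl x'" "y \<in> Y" "x' \<in> X" by auto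
      then show "?P z z' = 0"
        by (simp add: sum_Plus fX fY L_def N_def idm_sum_left idm_sum_right sum_negf)
    qed (use fX fY in auto)
    also have "det_on (Inl ` X) ?P = 1"
      unfolding det_on_Inl[OF fX]
      by (rule det_on_idm_cong[OF fX]) (simp add: sum_Plus fX fY L_def N_def idm_sum_left idm_sum_right sum_negf)
    also have "det_on (Inr ` Y) ?P = det_on Y (\<lambda>y y'. idm y y' - (\<Sum>x\<in>X. B y x * A x y'))"
      unfolding det_on_Inr[OF fY]
      by (rule det_on_cong) (simp add: sum_Plus fX fY L_def N_def idm_sum_left idm_sum_right sum_negf)
    finally show ?thesis by simp
  qed
  have NL: "det_on ?Z (\<lambda>z z'. \<Sum>w\<in>?Z. N z w * L w z') = det_on X (\<lambda>x x'. idm x x' - (\<Sum>y\<in>Y. A x y * B y x'))"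
  proof -
    let ?P = "\<lambda>z z'. \<Sum>w\<in>?Z. N z w * L w z'"
    have "det_on ?Z ?P = det_on (Inr ` Y \<union> Inl ` X) ?P" by (simp add: Un_commute)
    also have "\<dots> = det_on (Inr ` Y) ?P * det_on (Inl ` X) ?P"
    proof (rule det_on_block)
      fix z z' :: "'a + 'b" assume "z \<in> Inr ` Y" "z' \<in> Inl ` X"
      then obtain y x' where "z = Inr y" "z' = Inl x'" "y \<in> Y" "x' \<in> X" by auto
      then show "?P z z' = 0"
        by (simp add: sum_Plus fX fY L_def N_def idm_sum_left idm_sum_right sum_negf)
    qed (use fX fY in auto)
    also have "det_on (Inr ` Y) ?P = 1"
      unfolding det_on_Inr[OF fY]
      by (rule det_on_idm_cong[OF fY]) (simp add: sum_Plus fX fY L_def N_def idm_sum_left idm_sum_right sum_negf)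
    also have "det_on (Inl ` X) ?P = det_on X (\<lambda>x x'. idm x x' - (\<Sum>y\<in>Y. A x y * B y x'))"
      unfolding det_on_Inl[OF fX]
      by (rule det_on_cong) (simp add: sum_Plus fX fY L_def N_def idm_sum_left idm_sum_right sum_negf)
    finally show ?thesis by simp
  qed
  have "det_on X (\<lambda>x x'. idm x x' - (\<Sum>y\<in>Y. A x y * B y x')) = det_on ?Z N * det_on ?Z L"
    using NL det_on_mult[OF fZ, of N L] by simp
  also have "\<dots> = det_on ?Z L * det_on ?Z N" by simp
  also have "\<dots> = det_on Y (\<lambda>y y'. idm y y' - (\<Sum>x\<in>X. B y x * A x y'))"
    using LN det_on_mult[OF fZ, of L N] by simp
  finally show ?thesis .
qed


definition mk :: "'v set \<Rightarrow> 'v \<times> nat \<Rightarrow> ('v set \<times> 'v) \<times> nat" where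
  "mk \<alpha> k = ((\<alpha>, fst k), snd k)"

definition sv :: "('v set \<times> 'v) \<times> nat \<Rightarrow> 'v set" where "sv x = fst (fst x)"
definition tv :: "('v set \<times> 'v) \<times> nat \<Rightarrow> 'v \<times> nat" where "tv x = (snd (fst x), snd x)"

lemma sv_mk[simp]: "sv (mk \<alpha> k) = \<alpha>" and tv_mk[simp]: "tv (mk \<alpha> k) = k"
  by (auto simp: sv_def tv_def mk_def)

lemma vert_idx_Sigma: "vert_idx A r = Sigma A (\<lambda>i. {..<r i})"
  by (auto simp: vert_idx_def)

lemma finite_vert_idx: "finite A \<Longrightarrow> finite (vert_idx A r)"
  unfolding vert_idx_Sigma by auto

lemma edge_idx_eq: "edge_idx F r = (\<lambda>(\<alpha>,k). mk \<alpha> k) ` Sigma F (\<lambda>\<alpha>. vert_idx \<alpha> r)"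
  unfolding edge_idx_def vert_idx_def dedges_def mk_def
  by (auto simp: image_iff) 

lemma inj_mk: "inj_on (\<lambda>(\<alpha>,k). mk \<alpha> k) S"
  by (auto simp: inj_on_def mk_def)

lemma finite_edge_idx: "finite F \<Longrightarrow> (\<And>\<alpha>. \<alpha> \<in> F \<Longrightarrow> finite \<alpha>) \<Longrightarrow> finite (edge_idx F r)"
  unfolding edge_idx_eq by (auto intro!: finite_imageI finite_SigmaI finite_vert_idx)

lemma sum_edge_idx:
  assumes "finite F" "\<And>\<alpha>. \<alpha> \<in> F \<Longrightarrow> finite \<alpha>"
  shows "(\<Sum>x\<in>edge_idx F r. f x) = (\<Sum>\<alpha>\<in>F. \<Sum>k\<in>vert_idx \<alpha> r. f (mk \<alpha> k))"
  unfolding edge_idx_eq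
  by (subst sum.reindex[OF inj_mk]) (simp add: sum.Sigma assms finite_vert_idx split_def)

lemma edge_idx_mem: "x \<in> edge_idx F r \<longleftrightarrow> sv x \<in> F \<and> tv x \<in> vert_idx (sv x) r \<and> x = mk (sv x) (tv x)"
  by (cases x) (auto simp: edge_idx_def dedges_def vert_idx_def sv_def tv_def mk_def)

lemma mk_mem: "\<alpha> \<in> F \<Longrightarrow> k \<in> vert_idx \<alpha> r \<Longrightarrow> mk \<alpha> k \<in> edge_idx F r"
  by (auto simp: edge_idx_mem)

lemma sum_edge_idx_block:
  assumes fF: "finite F" and fin: "\<And>\<alpha>. \<alpha> \<in> F \<Longrightarrow> finite \<alpha>" and a: "\<alpha> \<in> F"
    and z: "\<And>z. z \<in> edge_idx F r \<Longrightarrow> sv z \<noteq> \<alpha> \<Longrightarrow> f z = 0"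
  shows "(\<Sum>z\<in>edge_idx F r. f z) = (\<Sum>k\<in>vert_idx \<alpha> r. f (mk \<alpha> k))"
proof -
  have "(\<Sum>z\<in>edge_idx F r. f z) = (\<Sum>z\<in>mk \<alpha> ` vert_idx \<alpha> r. f z)"
  proof (rule sum.mono_neutral_right)
    show "finite (edge_idx F r)" using fF fin by (rule finite_edge_idx)
    show "mk \<alpha> ` vert_idx \<alpha> r \<subseteq> edge_idx F r" using a by (auto intro: mk_mem)
    show "\<forall>z\<in>edge_idx F r - mk \<alpha> ` vert_idx \<alpha> r. f z = 0"
    proof
      fix y assume y: "y \<in> edge_idx F r - mk \<alpha> ` vert_idx \<alpha> r"
      show "f y = 0"
      proof (cases "sv y = \<alpha>")
        case True
        with y have "y = mk \<alpha> (tv y)" "tv y \<in> vert_idx \<alpha> r" by (auto simp: edge_idx_mem)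
        with y show ?thesis by blast
      next
        case False then show ?thesis using y z by blast
      qed
    qed
  qed
  also have "\<dots> = (\<Sum>k\<in>vert_idx \<alpha> r. f (mk \<alpha> k))"
    by (subst sum.reindex) (auto simp: inj_on_def mk_def)
  finally show ?thesis .
qed


definition UX :: "('v set \<Rightarrow> 'v \<Rightarrow> 'v \<Rightarrow> nat \<Rightarrow> nat \<Rightarrow> complex) \<Rightarrow> ('v set \<times> 'v) \<times> nat \<Rightarrow> ('v set \<times> 'v) \<times> nat \<Rightarrow> complex" where
  "UX u x y = (if sv x = sv y then Umat u (sv x) (tv x) (tv y) else 0)"

definition AX :: "('v set \<Rightarrow> ('v \<times> nat) \<Rightarrow> ('v \<times> nat) \<Rightarrow> complex) \<Rightarrow> ('v set \<times> 'v) \<times> nat \<Rightarrow> 'v \<times> nat \<Rightarrow> complex" where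
  "AX w x g = (if fst g \<in> sv x then idm (tv x) g - w (sv x) (tv x) g else 0)"

lemma sv_tup[simp]: "sv ((\<alpha>,i),a) = \<alpha>" and tv_tup[simp]: "tv ((\<alpha>,i),a) = (i,a)"
  by (auto simp: sv_def tv_def)

lemma stepA:
  assumes fF: "finite F" and fin: "\<And>\<alpha>. \<alpha> \<in> F \<Longrightarrow> finite \<alpha>"
    and inv: "\<And>\<alpha>. \<alpha> \<in> F \<Longrightarrow> is_inverse_on (vert_idx \<alpha> r) (Umat u \<alpha>) (w \<alpha>)"
    and x: "x \<in> edge_idx F r" and y: "y \<in> edge_idx F r"
  shows "idm x y - Mop u x y = UX u x y - (\<Sum>z\<in>edge_idx F r. UX u x z * AX w z (tv y))"
proof -
  obtain \<alpha> i a where xe: "x = ((\<alpha>,i),a)" by (metis prod.collapse)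
  obtain \<beta> j b where ye: "y = ((\<beta>,j),b)" by (metis prod.collapse)
  have aF: "\<alpha> \<in> F" and xi: "(i,a) \<in> vert_idx \<alpha> r" using x xe by (auto simp: edge_idx_mem sv_def tv_def)
  have bF: "\<beta> \<in> F" and yj: "(j,b) \<in> vert_idx \<beta> r" using y ye by (auto simp: edge_idx_mem sv_def tv_def)
  have fa: "finite (vert_idx \<alpha> r)" using fin[OF aF] by (rule finite_vert_idx)
  have "(\<Sum>z\<in>edge_idx F r. UX u x z * AX w z (tv y)) = (\<Sum>k\<in>vert_idx \<alpha> r. UX u x (mk \<alpha> k) * AX w (mk \<alpha> k) (tv y))"
    by (rule sum_edge_idx_block[OF fF fin aF]) (auto simp: UX_def xe sv_def)
  also have "\<dots> = (if j \<in> \<alpha> then Umat u \<alpha> (i,a) (j,b) - idm (i,a) (j,b) else 0)"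
  proof (cases "j \<in> \<alpha>")
    case True
    have jb: "(j,b) \<in> vert_idx \<alpha> r" using True yj by (auto simp: vert_idx_def)
    have "(\<Sum>k\<in>vert_idx \<alpha> r. UX u x (mk \<alpha> k) * AX w (mk \<alpha> k) (tv y))
        = (\<Sum>k\<in>vert_idx \<alpha> r. Umat u \<alpha> (i,a) k * idm k (j,b)) - (\<Sum>k\<in>vert_idx \<alpha> r. Umat u \<alpha> (i,a) k * w \<alpha> k (j,b))"
      by (simp add: UX_def AX_def xe ye True sum_subtractf[symmetric] right_diff_distrib)
    also have "(\<Sum>k\<in>vert_idx \<alpha> r. Umat u \<alpha> (i,a) k * w \<alpha> k (j,b)) = idm (i,a) (j,b)"
      using inv[OF aF] xi jb unfolding is_inverse_on_def by blast
    also have "(\<Sum>k\<in>vert_idx \<alpha> r. Umat u \<alpha> (i,a) k * idm k (j,b)) = Umat u \<alpha> (i,a) (j,b)"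
      by (rule idm_sum_right[OF fa jb])
    finally show ?thesis using True by simp
  next
    case False
    then show ?thesis by (simp add: AX_def ye tv_def)
  qed
  finally have S: "(\<Sum>z\<in>edge_idx F r. UX u x z * AX w z (tv y)) = (if j \<in> \<alpha> then Umat u \<alpha> (i,a) (j,b) - idm (i,a) (j,b) else 0)" .
  show ?thesis
    unfolding S using yj xi
    by (auto simp: xe ye UX_def Mop_def feeds_def idm_def Umat_def sv_def tv_def vert_idx_def)
qed


lemma edge_idx_insert: "edge_idx (insert \<alpha> F) r = mk \<alpha> ` vert_idx \<alpha> r \<union> edge_idx F r"
  by (auto simp: edge_idx_def dedges_def vert_idx_def mk_def image_iff)

lemma stepB:
  assumes "finite F" "\<And>\<alpha>. \<alpha> \<in> F \<Longrightarrow> finite \<alpha>"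
  shows "det_on (edge_idx F r) (UX u) = (\<Prod>\<alpha>\<in>F. det_on (vert_idx \<alpha> r) (Umat u \<alpha>))"
  using assms
proof (induction F rule: finite_induct)
  case empty
  then show ?case by (simp add: edge_idx_def dedges_def det_on_def)
next
  case (insert \<alpha> F)
  have fa: "finite \<alpha>" using insert by auto
  have fF: "\<And>\<beta>. \<beta> \<in> F \<Longrightarrow> finite \<beta>" using insert by auto
  have "det_on (edge_idx (insert \<alpha> F) r) (UX u) = det_on (mk \<alpha> ` vert_idx \<alpha> r) (UX u) * det_on (edge_idx F r) (UX u)"
    unfolding edge_idx_insert
  proof (rule det_on_block)
    show "finite (mk \<alpha> ` vert_idx \<alpha> r)" using fa by (simp add: finite_vert_idx)
    show "finite (edge_idx F r)" using insert.hyps(1) fF by (rule finite_edge_idx)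
    show "mk \<alpha> ` vert_idx \<alpha> r \<inter> edge_idx F r = {}"
      using insert.hyps(2) by (auto simp: edge_idx_mem)
    show "\<And>x y. x \<in> mk \<alpha> ` vert_idx \<alpha> r \<Longrightarrow> y \<in> edge_idx F r \<Longrightarrow> UX u x y = 0"
      using insert.hyps(2) by (auto simp: edge_idx_mem UX_def)
  qed
  also have "det_on (mk \<alpha> ` vert_idx \<alpha> r) (UX u) = det_on (vert_idx \<alpha> r) (Umat u \<alpha>)"
  proof -
    have "det_on (mk \<alpha> ` vert_idx \<alpha> r) (UX u) = det_on (vert_idx \<alpha> r) (\<lambda>k l. UX u (mk \<alpha> k) (mk \<alpha> l))"
      by (rule det_on_reindex) (auto simp: bij_betw_def inj_on_def mk_def fa finite_vert_idx)
    then show ?thesis by (simp add: UX_def)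
  qed
  also have "det_on (edge_idx F r) (UX u) = (\<Prod>\<alpha>\<in>F. det_on (vert_idx \<alpha> r) (Umat u \<alpha>))"
    using insert.IH fF by blast
  finally show ?case using insert.hyps by simp
qed

lemma idm_sum_left': "finite X \<Longrightarrow> (\<Sum>x\<in>X. idm x0 x * f x) = (if x0 \<in> X then f x0 else 0)"
proof -
  assume "finite X"
  have "(\<Sum>x\<in>X. idm x0 x * f x) = (\<Sum>x\<in>X. if x0 = x then f x else 0)"
    by (rule sum.cong) (auto simp: idm_def)
  then show ?thesis using \<open>finite X\<close> by simp
qed

lemma stepD:
  assumes fF: "finite F" and fin: "\<And>\<alpha>. \<alpha> \<in> F \<Longrightarrow> finite \<alpha>" and g: "snd g < r (fst g)"
  shows "(\<Sum>x\<in>edge_idx F r. idm g (tv x) * AX w x h) = Dop F g h - Wop F w g h"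
proof -
  obtain i a where ge: "g = (i,a)" by force
  obtain j b where he: "h = (j,b)" by force
  let ?F' = "{\<alpha>\<in>F. i \<in> \<alpha> \<and> j \<in> \<alpha>}"
  have "(\<Sum>x\<in>edge_idx F r. idm g (tv x) * AX w x h) = (\<Sum>\<alpha>\<in>F. \<Sum>k\<in>vert_idx \<alpha> r. idm g k * AX w (mk \<alpha> k) h)"
    by (simp add: sum_edge_idx[OF fF fin])
  also have "\<dots> = (\<Sum>\<alpha>\<in>F. if i \<in> \<alpha> \<and> j \<in> \<alpha> then idm g h - w \<alpha> g h else 0)"
  proof (rule sum.cong[OF refl])
    fix \<alpha> assume aF: "\<alpha> \<in> F"
    have "(\<Sum>k\<in>vert_idx \<alpha> r. idm g k * AX w (mk \<alpha> k) h) = (if g \<in> vert_idx \<alpha> r then AX w (mk \<alpha> g) h else 0)"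
      by (rule idm_sum_left'[OF finite_vert_idx[OF fin[OF aF]]])
    then show "(\<Sum>k\<in>vert_idx \<alpha> r. idm g k * AX w (mk \<alpha> k) h) = (if i \<in> \<alpha> \<and> j \<in> \<alpha> then idm g h - w \<alpha> g h else 0)"
      using g by (simp add: ge he AX_def vert_idx_def)
  qed
  also have "\<dots> = (\<Sum>\<alpha>\<in>?F'. idm g h - w \<alpha> g h)"
    by (simp add: sum.inter_filter[OF fF])
  also have "\<dots> = (\<Sum>\<alpha>\<in>?F'. idm g h) - (\<Sum>\<alpha>\<in>?F'. w \<alpha> g h)"
    by (simp add: sum_subtractf)
  also have "(\<Sum>\<alpha>\<in>?F'. idm g h) = Dop F g h"
    by (auto simp: Dop_def idm_def hdeg_def ge he)
  also have "(\<Sum>\<alpha>\<in>?F'. w \<alpha> g h) = Wop F w g h"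
  proof -
    have P: "{(e, e'). e \<in> dedges F \<and> e' \<in> dedges F \<and> snd e = fst g \<and> fst e = fst e' \<and> snd e' = fst h}
        = (\<lambda>\<alpha>. ((\<alpha>,i),(\<alpha>,j))) ` ?F'"
      by (auto simp: dedges_def ge he image_iff)
    show ?thesis unfolding Wop_def P
      by (subst sum.reindex) (auto simp: inj_on_def)
  qed
  finally show ?thesis .
qed


theorem theorem3:
  fixes V :: "'v set" and F :: "'v set set" and r :: "'v \<Rightarrow> nat"
    and u :: "'v set \<Rightarrow> 'v \<Rightarrow> 'v \<Rightarrow> nat \<Rightarrow> nat \<Rightarrow> complex"
    and w :: "'v set \<Rightarrow> ('v \<times> nat) \<Rightarrow> ('v \<times> nat) \<Rightarrow> complex"
  assumes "finite V" and "finite F"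
    and "\<And>\<alpha>. \<alpha> \<in> F \<Longrightarrow> \<alpha> \<noteq> {} \<and> \<alpha> \<subseteq> V"
    and "\<And>i. i \<in> V \<Longrightarrow> r i > 0"
    and "\<And>\<alpha>. \<alpha> \<in> F \<Longrightarrow> is_inverse_on (vert_idx \<alpha> r) (Umat u \<alpha>) (w \<alpha>)"
  shows "zeta_inv F r u = det_on (edge_idx F r) (\<lambda>x y. idm x y - Mop u x y)
    \<and> det_on (edge_idx F r) (\<lambda>x y. idm x y - Mop u x y)
        = det_on (vert_idx V r) (\<lambda>x y. idm x y - Dop F x y + Wop F w x y)
          * (\<Prod>\<alpha>\<in>F. det_on (vert_idx \<alpha> r) (Umat u \<alpha>))"
proof -
  note fV = assms(1) and fF = assms(2) and sub = assms(3) and inv = assms(5)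
  have fin: "\<And>\<alpha>. \<alpha> \<in> F \<Longrightarrow> finite \<alpha>" using sub fV finite_subset by blast
  let ?X = "edge_idx F r" and ?Y = "vert_idx V r"
  have fX: "finite ?X" using fF fin by (rule finite_edge_idx)
  have fY: "finite ?Y" using fV by (rule finite_vert_idx)
  let ?Z = "\<lambda>x y. idm x y - (\<Sum>g\<in>?Y. AX w x g * idm g (tv y))"
  have tvY: "\<And>y. y \<in> ?X \<Longrightarrow> tv y \<in> ?Y"
    using sub by (fastforce simp: edge_idx_mem vert_idx_def)
  have "det_on ?X (\<lambda>x y. idm x y - Mop u x y) = det_on ?X (\<lambda>x y. \<Sum>z\<in>?X. UX u x z * ?Z z y)"
  proof (rule det_on_cong)
    fix x y assume x: "x \<in> ?X" and y: "y \<in> ?X"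
    have "(\<Sum>z\<in>?X. UX u x z * ?Z z y) = (\<Sum>z\<in>?X. UX u x z * idm z y) - (\<Sum>z\<in>?X. UX u x z * AX w z (tv y))"
      by (simp add: idm_sum_right[OF fY tvY[OF y]] right_diff_distrib sum_subtractf)
    also have "\<dots> = UX u x y - (\<Sum>z\<in>?X. UX u x z * AX w z (tv y))"
      by (simp add: idm_sum_right[OF fX y])
    finally show "idm x y - Mop u x y = (\<Sum>z\<in>?X. UX u x z * ?Z z y)"
      using stepA[OF fF fin inv x y] by simp
  qed
  also have "\<dots> = det_on ?X (UX u) * det_on ?X ?Z"
    by (rule det_on_mult[OF fX])
  also have "det_on ?X ?Z = det_on ?Y (\<lambda>g h. idm g h - (\<Sum>x\<in>?X. idm g (tv x) * AX w x h))"
    by (rule det_on_sylvester[OF fX fY])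
  also have "\<dots> = det_on ?Y (\<lambda>x y. idm x y - Dop F x y + Wop F w x y)"
  proof (rule det_on_cong)
    fix g h assume g: "g \<in> ?Y" and h: "h \<in> ?Y"
    have "snd g < r (fst g)" using g by (auto simp: vert_idx_def)
    then show "idm g h - (\<Sum>x\<in>?X. idm g (tv x) * AX w x h) = idm g h - Dop F g h + Wop F w g h"
      using stepD[OF fF fin] by simp
  qed
  also have "det_on ?X (UX u) = (\<Prod>\<alpha>\<in>F. det_on (vert_idx \<alpha> r) (Umat u \<alpha>))"
    by (rule stepB[OF fF fin])
  finally show ?thesis by (simp add: zeta_inv_def mult.commute)
qed

end
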